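(* Let $n\ge 2$ and $N=\{1,\dots,n\}$. Consider the randomized selection mechanism Simple $k$-sample on $\mathcal{G}_n$, with $k=\left\lceil 4^{1/3} n^{2/3} \ln^{1/3} n\right\rceil$: it forms a sample $S$ by selecting $k$ times a vertex of $N$ uniformly at random with replacement ($S$ is a multiset), and returns as winner (if any) a vertex $w\in\arg\max_{u\in N\setminus S}\delta_S(u,\mathbf{x})$, where in $\delta_S(u,\mathbf{x})$ each edge from a vertex of $S$ is counted with the multiplicity of that vertex in $S$. Then this mechanism is impartial and $\Theta(n^{2/3}\ln^{1/3} n)$-additive, i.e., $\max_{\mathbf{x}\in\mathcal{G}_n}\{\Delta(\mathbf{x})-\mathbb{E}[\delta(f(\mathbf{x}))]\}=O(n^{2/3}\ln^{1/3}n)$.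
   Context: $\mathcal{G}_n$ is the set of all directed graphs (nomination profiles) on vertex set $N=\{1,\dots,n\}$ with no self-loops; each vertex may have any out-degree (including $0$). For a profile $\mathbf{x}$, $x_u$ is the set of outgoing edges of $u$, and $(x'_u,\mathbf{x}_{-u})$ is the profile in which $u$'s outgoing edges are replaced by $x'_u$. $\delta_S(u,\mathbf{x})$ is the in-degree of $u$ counting only edges originating from $S$; $\delta(u,\mathbf{x})=\delta_N(u,\mathbf{x})$; $\Delta(\mathbf{x})=\max_u\delta(u,\mathbf{x})$. A selection mechanism $f$ maps each profile to a probability distribution over the vertices together with the option of no winner. It is impartial if for every profile $\mathbf{x}$, every vertex $u$ and every alternative set of outgoing edges $x'_u$, the probability that $u$ is selected is the same under $\mathbf{x}$ and $(x'_u,\mathbf{x}_{-u})$. $\mathbb{E}[\delta(f(\mathbf{x}))]=\sum_u \Pr[f(\mathbf{x})=u]\,\delta(u,\mathbf{x})$ (no winner contributes $0$). $f$ is $\alpha(n)$-additive if $\max_{\mathbf{x}\in\mathcal{G}_n}\{\Delta(\mathbf{x})-\mathbb{E}[\delta(f(\mathbf{x}))]\}\le\alpha(n)$ for every $n$. *)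

theory Defs
  imports "HOL-Probability.Probability" "HOL-Library.Landau_Symbols"
begin

text \<open>Vertex set N = {1..n}. A nomination profile is an edge relation on N without self-loops;
  a pair (v,u) means v nominates u.\<close>

definition verts :: "nat \<Rightarrow> nat set" where
  "verts n = {1..n}"

definition profile :: "nat \<Rightarrow> (nat \<times> nat) set \<Rightarrow> bool" where
  "profile n E \<longleftrightarrow> E \<subseteq> verts n \<times> verts n \<and> (\<forall>u. (u, u) \<notin> E)"

definition profiles :: "nat \<Rightarrow> (nat \<times> nat) set set" where
  "profiles n = {E. profile n E}"

definition indeg_from :: "nat set \<Rightarrow> (nat \<times> nat) set \<Rightarrow> nat \<Rightarrow> nat" where
  "indeg_from S E u = card {v \<in> S. (v, u) \<in> E}"

definition indeg :: "nat \<Rightarrow> (nat \<times> nat) set \<Rightarrow> nat \<Rightarrow> nat" where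
  "indeg n E u = indeg_from (verts n) E u"

definition maxdeg :: "nat \<Rightarrow> (nat \<times> nat) set \<Rightarrow> nat" where
  "maxdeg n E = Max (indeg n E ` verts n)"

text \<open>In-degree counting edges from a sample (multiset, represented by the list of draws),
  each edge from a sampled vertex counted with that vertex's multiplicity.\<close>
definition indeg_sample :: "nat list \<Rightarrow> (nat \<times> nat) set \<Rightarrow> nat \<Rightarrow> nat" where
  "indeg_sample xs E u = (\<Sum>v\<in>set xs. count (mset xs) v * (if (v, u) \<in> E then 1 else 0))"

text \<open>A selection mechanism (for fixed n): profile \<mapsto> distribution over winners (None = no winner).\<close>
type_synonym mechanism = "(nat \<times> nat) set \<Rightarrow> nat option pmf"

definition impartial :: "nat \<Rightarrow> mechanism \<Rightarrow> bool" where
  "impartial n f \<longleftrightarrow>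
     (\<forall>E E' u. profile n E \<and> profile n E' \<and> u \<in> verts n \<and>
        (\<forall>v w. v \<noteq> u \<longrightarrow> ((v, w) \<in> E \<longleftrightarrow> (v, w) \<in> E')) \<longrightarrow>
        pmf (f E) (Some u) = pmf (f E') (Some u))"

definition exp_deg :: "nat \<Rightarrow> mechanism \<Rightarrow> (nat \<times> nat) set \<Rightarrow> real" where
  "exp_deg n f E = (\<Sum>u\<in>verts n. pmf (f E) (Some u) * real (indeg n E u))"

definition worst_gap :: "nat \<Rightarrow> mechanism \<Rightarrow> real" where
  "worst_gap n f = Max ((\<lambda>E. real (maxdeg n E) - exp_deg n f E) ` profiles n)"

text \<open>Simple k-sample: k i.i.d. uniform draws from N (uniform over length-k sequences);
  winner is a maximiser of indeg_sample over N minus the sample, chosen from the argmax set by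
  the tie-breaking rule tb; no winner if N minus the sample is empty.\<close>
definition sample_argmax :: "nat \<Rightarrow> (nat \<times> nat) set \<Rightarrow> nat list \<Rightarrow> nat set" where
  "sample_argmax n E xs = {u \<in> verts n - set xs.
      \<forall>v \<in> verts n - set xs. indeg_sample xs E v \<le> indeg_sample xs E u}"

definition simple_k_sample :: "(nat set \<Rightarrow> nat) \<Rightarrow> nat \<Rightarrow> nat \<Rightarrow> mechanism" where
  "simple_k_sample tb k n E =
     map_pmf (\<lambda>xs. if verts n - set xs = {} then None else Some (tb (sample_argmax n E xs)))
       (pmf_of_set {xs. length xs = k \<and> set xs \<subseteq> verts n})"

definition k_opt :: "nat \<Rightarrow> nat" where
  "k_opt n = nat \<lceil>4 powr (1/3) * real n powr (2/3) * ln (real n) powr (1/3)\<rceil>"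

end

theory Submission
  imports Defs
begin

lemma indeg_sample_list:
  "indeg_sample xs E u = sum_list (map (\<lambda>v. if (v, u) \<in> E then 1 else 0) xs)"
  unfolding indeg_sample_def by (simp add: sum_list_map_eq_sum_count count_mset)

lemma indeg_sample_map:
  "real (indeg_sample (map g [0..<k]) E u) = (\<Sum>i<k. if (g i, u) \<in> E then 1 else 0)"
proof -
  have "indeg_sample (map g [0..<k]) E u = (\<Sum>i\<in>set [0..<k]. if (g i, u) \<in> E then 1 else 0)"
    unfolding indeg_sample_list sum_set_upt_conv_sum_list_nat by (simp add: o_def)
  also have "set [0..<k] = {..<k}" by auto
  finally have "real (indeg_sample (map g [0..<k]) E u) = (\<Sum>i<k. real (if (g i, u) \<in> E then 1 else 0))"
    by (simp only: of_nat_sum)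
  also have "\<dots> = (\<Sum>i<k. if (g i, u) \<in> E then 1 else 0)"
    by (rule sum.cong) auto
  finally show ?thesis .
qed

lemma sample_argmax_ne:
  assumes "verts n - set xs \<noteq> {}"
  shows "sample_argmax n E xs \<noteq> {}"
proof -
  let ?F = "verts n - set xs"
  let ?h = "indeg_sample xs E"
  have fin: "finite (?h ` ?F)" by (simp add: verts_def)
  have "Max (?h ` ?F) \<in> ?h ` ?F" using fin assms by (intro Max_in) auto
  then obtain u where u: "u \<in> ?F" "?h u = Max (?h ` ?F)" by auto
  have "\<forall>v\<in>?F. ?h v \<le> ?h u" using u fin by auto
  with u show ?thesis unfolding sample_argmax_def by blast
qed

lemma tb_in_argmax:
  assumes tb: "\<forall>A. A \<noteq> {} \<longrightarrow> tb A \<in> A" and "verts n - set xs \<noteq> {}"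
  shows "tb (sample_argmax n E xs) \<in> sample_argmax n E xs"
  using tb sample_argmax_ne[OF assms(2)] by blast

lemma impartial_sks:
  assumes tb: "\<forall>A. A \<noteq> {} \<longrightarrow> tb A \<in> A"
  shows "impartial n (simple_k_sample tb k n)"
  unfolding impartial_def
proof (intro allI impI, elim conjE)
  fix E E' :: "(nat \<times> nat) set" and u :: nat
  assume agree: "\<forall>v w. v \<noteq> u \<longrightarrow> ((v, w) \<in> E \<longleftrightarrow> (v, w) \<in> E')"
  define \<phi> where "\<phi> F xs = (if verts n - set xs = {} then None else Some (tb (sample_argmax n F xs)))" for F xs
  have key: "\<phi> E xs = Some u \<longleftrightarrow> \<phi> E' xs = Some u" for xs
  proof (cases "verts n - set xs = {}")
    case True then show ?thesis by (simp add: \<phi>_def)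
  next
    case False
    show ?thesis
    proof (cases "u \<in> set xs")
      case True
      have "tb (sample_argmax n F xs) \<noteq> u" for F
        using tb_in_argmax[OF tb False, of F] True unfolding sample_argmax_def by auto
      then show ?thesis using False by (simp add: \<phi>_def)
    next
      case uN: False
      have "indeg_sample xs E v = indeg_sample xs E' v" for v
        unfolding indeg_sample_def
        by (rule sum.cong) (use agree uN in auto)
      then have "sample_argmax n E xs = sample_argmax n E' xs"
        unfolding sample_argmax_def by simp
      then show ?thesis by (simp add: \<phi>_def)
    qed
  qed
  have "\<phi> E -` {Some u} = \<phi> E' -` {Some u}" using key by auto
  then show "pmf (simple_k_sample tb k n E) (Some u) = pmf (simple_k_sample tb k n E') (Some u)"
    unfolding simple_k_sample_def pmf_map \<phi>_def[symmetric] by simp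
qed


lemma gap_bound:
  fixes E :: "(nat \<times> nat) set"
  assumes tb: "\<forall>A. A \<noteq> {} \<longrightarrow> tb A \<in> A"
    and n: "n \<ge> 2" and k: "k \<ge> 1" and E: "profile n E"
  shows "real (maxdeg n E) - exp_deg n (simple_k_sample tb k n) E
           \<le> real k + 2 + 2 * real n * sqrt (real k * ln (real n)) / real k"
proof -
  define A where "A = verts n"
  have finA: "finite A" and cardA: "card A = n" and Ane: "A \<noteq> {}"
    using n by (auto simp: A_def verts_def)
  define Lists where "Lists = {xs. length xs = k \<and> set xs \<subseteq> A}"
  define L where "L = pmf_of_set Lists"
  define P where "P = Pi_pmf {..<k} (0::nat) (\<lambda>_. pmf_of_set A)"
  define m where "m g = map g [0..<k]" for g :: "nat \<Rightarrow> nat"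
  define PE where "PE = PiE_dflt {..<k} (0::nat) (\<lambda>_. A)"
  have finL: "finite Lists"
    using finite_lists_length_eq[OF finA, of k] unfolding Lists_def by (simp add: conj_commute)
  have P_eq: "P = pmf_of_set PE"
    unfolding P_def PE_def using finA Ane by (intro Pi_pmf_of_set) auto
  have inj: "inj_on m PE"
  proof (rule inj_onI)
    fix g g' assume g: "g \<in> PE" "g' \<in> PE" and eq: "m g = m g'"
    show "g = g'"
    proof
      fix i show "g i = g' i"
      proof (cases "i < k")
        case True
        then have "m g ! i = g i" "m g' ! i = g' i" by (auto simp: m_def)
        then show ?thesis using eq by simp
      next
        case False then show ?thesis using g by (auto simp: PE_def PiE_dflt_def)
      qed
    qed
  qed
  have img: "m ` PE = Lists"
  proof
    show "m ` PE \<subseteq> Lists" by (auto simp: m_def PE_def PiE_dflt_def Lists_def)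
    show "Lists \<subseteq> m ` PE"
    proof
      fix xs assume xs: "xs \<in> Lists"
      define g where "g i = (if i < k then xs ! i else 0)" for i
      have "g \<in> PE" using xs by (auto simp: g_def PE_def PiE_dflt_def Lists_def)
      moreover have "m g = xs" using xs
        by (auto simp: m_def g_def Lists_def intro: nth_equalityI)
      ultimately show "xs \<in> m ` PE" by blast
    qed
  qed
  have bij: "bij_betw m PE Lists" using inj img by (simp add: bij_betw_def)
  have finPE: "finite PE" using bij finL bij_betw_finite by blast
  obtain a where "a \<in> A" using Ane by blast
  then have "replicate k a \<in> Lists" by (auto simp: Lists_def)
  then have Lne: "Lists \<noteq> {}" by blast
  then have PEne: "PE \<noteq> {}" using img by auto
  have L_eq: "L = map_pmf m P"
    unfolding L_def P_eq using bij PEne finPE by (simp add: map_pmf_of_set_bij_betw)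
  have setP: "set_pmf P = PE" using P_eq finPE PEne by simp
  have setL: "set_pmf L = Lists" using L_def finL Lne by simp
  define \<delta> where "\<delta> v = real (indeg n E v)" for v
  have indeg_card: "indeg n E v = card {w \<in> A. (w, v) \<in> E}" for v
    by (simp add: indeg_def indeg_from_def A_def)
  have \<delta>_le: "\<delta> v \<le> real n" for v
  proof -
    have "card {w \<in> A. (w, v) \<in> E} \<le> card A" using finA by (intro card_mono) auto
    then show ?thesis by (simp add: \<delta>_def indeg_card cardA)
  qed
  have \<delta>_ge: "\<delta> v \<ge> 0" for v by (simp add: \<delta>_def)
  have finimg: "finite (indeg n E ` A)" using finA by simp
  have "maxdeg n E \<in> indeg n E ` A"
    unfolding maxdeg_def A_def[symmetric] using finimg Ane by (intro Max_in) auto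
  then obtain us where us: "us \<in> A" "indeg n E us = maxdeg n E" by auto
  define \<Delta> where "\<Delta> = real (maxdeg n E)"
  have \<Delta>_us: "\<delta> us = \<Delta>" by (simp add: \<delta>_def \<Delta>_def us)
  have \<Delta>_le: "\<Delta> \<le> real n" using \<delta>_le[of us] \<Delta>_us by simp
  define \<phi> where "\<phi> xs = (if A - set xs = {} then None else Some (tb (sample_argmax n E xs)))" for xs
  define D' where "D' ow = (case ow of None \<Rightarrow> 0 | Some w \<Rightarrow> \<delta> w)" for ow
  have sks: "simple_k_sample tb k n E = map_pmf \<phi> L"
    unfolding simple_k_sample_def L_def Lists_def \<phi>_def A_def by simp
  have \<phi>_in: "\<phi> xs = Some w \<Longrightarrow> w \<in> A - set xs \<and> (\<forall>v \<in> A - set xs. indeg_sample xs E v \<le> indeg_sample xs E w)" for xs w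
  proof -
    assume h: "\<phi> xs = Some w"
    then have ne: "verts n - set xs \<noteq> {}" by (auto simp: \<phi>_def A_def split: if_splits)
    have "w = tb (sample_argmax n E xs)" using h by (auto simp: \<phi>_def split: if_splits)
    then have "w \<in> sample_argmax n E xs" using tb_in_argmax[OF tb ne] by simp
    then show ?thesis by (simp add: sample_argmax_def A_def)
  qed
  have expdeg: "exp_deg n (simple_k_sample tb k n) E = measure_pmf.expectation L (\<lambda>xs. D' (\<phi> xs))"
  proof -
    have "measure_pmf.expectation L (\<lambda>xs. D' (\<phi> xs)) = measure_pmf.expectation (map_pmf \<phi> L) D'"
      by simp
    also have "\<dots> = (\<Sum>ow\<in>Some ` A. D' ow * pmf (map_pmf \<phi> L) ow)"
    proof (rule integral_measure_pmf_real)
      show "finite (Some ` A)" using finA by simp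
      fix ow assume ow: "ow \<in> set_pmf (map_pmf \<phi> L)" "D' ow \<noteq> 0"
      then obtain w where "ow = Some w" by (cases ow) (auto simp: D'_def)
      with ow show "ow \<in> Some ` A" using \<phi>_in by auto
    qed
    also have "\<dots> = (\<Sum>u\<in>A. pmf (map_pmf \<phi> L) (Some u) * \<delta> u)"
      by (subst sum.reindex) (auto simp: D'_def mult.commute)
    finally show ?thesis unfolding exp_deg_def sks A_def \<delta>_def by simp
  qed
  have intP: "integrable (measure_pmf P) f" for f :: "(nat \<Rightarrow> nat) \<Rightarrow> real"
    using setP finPE by (intro integrable_measure_pmf_finite) simp
  have intL: "integrable (measure_pmf L) f" for f :: "nat list \<Rightarrow> real"
    using setL finL by (intro integrable_measure_pmf_finite) simp
  have gap_eq: "\<Delta> - exp_deg n (simple_k_sample tb k n) E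
      = measure_pmf.expectation P (\<lambda>g. \<Delta> - D' (\<phi> (m g)))"
  proof -
    have "measure_pmf.expectation L (\<lambda>xs. \<Delta> - D' (\<phi> xs)) = \<Delta> - measure_pmf.expectation L (\<lambda>xs. D' (\<phi> xs))"
      using intL by (subst Bochner_Integration.integral_diff) auto
    then show ?thesis unfolding expdeg using L_eq by simp
  qed
  define t where "t = sqrt (real k * ln (real n))"
  define \<mu> where "\<mu> v = real k * \<delta> v / real n" for v
  define Y where "Y v g = (\<Sum>i<k. if (g i, v) \<in> E then 1 else (0::real))" for v and g :: "nat \<Rightarrow> nat"
  define bad1 where "bad1 = {g. \<exists>i<k. g i = us}"
  define bad2 where "bad2 = {g. \<exists>v\<in>A. \<bar>Y v g - \<mu> v\<bar> \<ge> t}"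
  have kpos: "real k > 0" using k by simp
  have npos: "real n > 0" using n by simp
  have tnn: "t \<ge> 0" using n unfolding t_def by simp
  have pw: "\<Delta> - D' (\<phi> (m g)) \<le> 2 * t * real n / real k + real n * indicator bad1 g + real n * indicator bad2 g"
    if g: "g \<in> PE" for g
  proof (cases "g \<in> bad1 \<or> g \<in> bad2")
    case True
    have "D' (\<phi> (m g)) \<ge> 0" by (cases "\<phi> (m g)") (auto simp: D'_def \<delta>_def)
    moreover have "2 * t * real n / real k \<ge> 0" using tnn by simp
    moreover have "real n * indicator bad1 g + real n * indicator bad2 g \<ge> real n"
      using True by (auto simp: indicator_def)
    ultimately show ?thesis using \<Delta>_le by linarith
  next
    case False
    have setm: "set (m g) = g ` {..<k}" by (auto simp: m_def)
    have "us \<notin> set (m g)" using False by (auto simp: setm bad1_def)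
    then have ne: "A - set (m g) \<noteq> {}" using us by blast
    then obtain w where w: "\<phi> (m g) = Some w" by (simp add: \<phi>_def)
    from \<phi>_in[OF w] \<open>us \<notin> set (m g)\<close> us
    have wA: "w \<in> A" and le: "indeg_sample (m g) E us \<le> indeg_sample (m g) E w" by auto
    have Yeq: "Y v g = real (indeg_sample (m g) E v)" for v
      unfolding Y_def m_def by (simp add: indeg_sample_map)
    have "Y us g \<le> Y w g" using le by (simp add: Yeq)
    moreover have "\<bar>Y w g - \<mu> w\<bar> < t" "\<bar>Y us g - \<mu> us\<bar> < t"
      using False wA us by (auto simp: bad2_def)
    ultimately have "\<mu> us - \<mu> w < 2 * t" by linarith
    then have "real k * (\<Delta> - \<delta> w) / real n < 2 * t"
      unfolding \<mu>_def \<Delta>_us[symmetric] by (simp add: right_diff_distrib diff_divide_distrib)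
    then have "\<Delta> - \<delta> w < 2 * t * real n / real k"
      using kpos npos by (simp add: field_simps)
    then show ?thesis using False w by (simp add: D'_def)
  qed
  have pb1: "measure_pmf.prob P bad1 \<le> real k / real n"
  proof -
    have "bad1 = (\<Union>i\<in>{..<k}. {g. g i = us})" by (auto simp: bad1_def)
    then have "measure_pmf.prob P bad1 \<le> (\<Sum>i<k. measure_pmf.prob P {g. g i = us})"
      by (simp add: measure_pmf.finite_measure_subadditive_finite)
    also have "\<dots> = (\<Sum>i<k. 1 / real n)"
    proof (rule sum.cong[OF refl])
      fix i assume i: "i \<in> {..<k}"
      have "measure_pmf.prob P {g. g i = us} = measure_pmf.prob (map_pmf (\<lambda>g. g i) P) {us}"
        by (simp add: vimage_def)
      also have "map_pmf (\<lambda>g. g i) P = pmf_of_set A" using i unfolding P_def by (simp add: Pi_pmf_component)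
      also have "measure_pmf.prob (pmf_of_set A) {us} = 1 / real n"
        using us finA Ane cardA by (simp add: measure_pmf_of_set)
      finally show "measure_pmf.prob P {g. g i = us} = 1 / real n" .
    qed
    finally show ?thesis by simp
  qed
  have pv: "measure_pmf.prob P {g. \<bar>Y v g - \<mu> v\<bar> \<ge> t} \<le> 2 / (real n)^2" if v: "v \<in> A" for v
  proof -
    define X where "X i g = (if (g i, v) \<in> E then 1 else (0::real))" for i :: nat and g :: "nat \<Rightarrow> nat"
    have expX: "measure_pmf.expectation P (X i) = \<delta> v / real n" if "i < k" for i
    proof -
      have "measure_pmf.expectation P (X i) = measure_pmf.expectation (map_pmf (\<lambda>g. g i) P) (\<lambda>w. if (w, v) \<in> E then 1 else (0::real))"
        by (simp add: X_def[abs_def])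
      also have "map_pmf (\<lambda>g. g i) P = pmf_of_set A" using that unfolding P_def by (simp add: Pi_pmf_component)
      also have "measure_pmf.expectation (pmf_of_set A) (\<lambda>w. if (w, v) \<in> E then 1 else (0::real)) = real (card {w\<in>A. (w,v)\<in>E}) / real n"
        using finA Ane cardA by (simp add: integral_pmf_of_set sum.If_cases Int_def)
      finally show ?thesis by (simp add: \<delta>_def indeg_card)
    qed
    have muv: "(\<Sum>i<k. measure_pmf.expectation P (X i)) = \<mu> v"
      using expX by (simp add: \<mu>_def)
    interpret H: Hoeffding_ineq "measure_pmf P" "{..<k}" X "\<lambda>_. 0" "\<lambda>_. 1" "\<Sum>i<k. measure_pmf.expectation P (X i)"
    proof unfold_locales
      show "prob_space.indep_vars (measure_pmf P) (\<lambda>_. borel) X {..<k}"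
        unfolding P_def X_def
        by (intro prob_space.indep_vars_compose2[OF _ indep_vars_Pi_pmf])
           (auto simp: measure_pmf.prob_space_axioms)
    qed (auto simp: X_def)
    have "measure_pmf.prob P {g \<in> space (measure_pmf P). \<bar>(\<Sum>i<k. X i g) - (\<Sum>i<k. measure_pmf.expectation P (X i))\<bar> \<ge> t}
         \<le> 2 * exp (-2 * t\<^sup>2 / (\<Sum>i<k. (1 - 0)\<^sup>2))"
      using k tnn by (intro H.Hoeffding_ineq_abs_ge) auto
    also have "(\<Sum>i<k. (1 - 0)\<^sup>2) = real k" by simp
    also have "-2 * t\<^sup>2 / real k = -2 * ln (real n)"
      using kpos npos by (simp add: t_def)
    also have "exp (-2 * ln (real n)) = 1 / (real n)^2"
    proof -
      have "2 * ln (real n) = ln ((real n)^2)" using npos by (simp add: ln_realpow)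
      then have "exp (2 * ln (real n)) = (real n)^2" using npos by simp
      then show ?thesis by (simp add: exp_minus divide_inverse)
    qed
    finally show ?thesis unfolding muv by (simp add: Y_def X_def)
  qed
  have pb2: "measure_pmf.prob P bad2 \<le> 2 / real n"
  proof -
    have "bad2 = (\<Union>v\<in>A. {g. \<bar>Y v g - \<mu> v\<bar> \<ge> t})" by (auto simp: bad2_def)
    then have "measure_pmf.prob P bad2 \<le> (\<Sum>v\<in>A. measure_pmf.prob P {g. \<bar>Y v g - \<mu> v\<bar> \<ge> t})"
      using finA by (simp add: measure_pmf.finite_measure_subadditive_finite)
    also have "\<dots> \<le> (\<Sum>v\<in>A. 2 / (real n)^2)" by (intro sum_mono pv)
    also have "\<dots> = 2 / real n" using cardA npos by (simp add: power2_eq_square)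
    finally show ?thesis .
  qed
  have "measure_pmf.expectation P (\<lambda>g. \<Delta> - D' (\<phi> (m g)))
      \<le> measure_pmf.expectation P (\<lambda>g. 2 * t * real n / real k + real n * indicator bad1 g + real n * indicator bad2 g)"
    using intP pw setP by (intro integral_mono_AE) (auto intro!: AE_pmfI)
  also have "\<dots> = 2 * t * real n / real k + real n * measure_pmf.prob P bad1 + real n * measure_pmf.prob P bad2"
    using intP by simp
  also have "\<dots> \<le> 2 * t * real n / real k + real n * (real k / real n) + real n * (2 / real n)"
    using pb1 pb2 npos by (intro add_mono mult_left_mono) auto
  also have "\<dots> = real k + 2 + 2 * real n * sqrt (real k * ln (real n)) / real k"
    using npos by (simp add: t_def)
  finally show ?thesis using gap_eq \<Delta>_def by simp
qed


lemma g_cube: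
  assumes "n \<ge> (3::nat)"
  shows "(real n powr (2/3) * ln (real n) powr (1/3))^3 = (real n)^2 * ln (real n)"
proof -
  have npos: "real n > 0" using assms by simp
  have lpos: "ln (real n) > 0" using assms by simp
  have pw: "(x powr r)^3 = x powr (r * 3)" if "x > 0" for x r :: real
  proof -
    have "(x powr r)^3 = (x powr r) powr (real 3)" using that by (simp add: powr_realpow)
    also have "\<dots> = x powr (r * 3)" by (simp add: powr_powr)
    finally show ?thesis .
  qed
  have a: "(real n powr (2/3))^3 = (real n)^2"
  proof -
    have "(real n powr (2/3))^3 = real n powr (real 2)" using pw[OF npos, of "2/3"] by simp
    also have "\<dots> = (real n)^2" using npos by (simp only: powr_realpow)
    finally show ?thesis .
  qed
  have b: "(ln (real n) powr (1/3))^3 = ln (real n)"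
    using pw[OF lpos, of "1/3"] lpos by simp
  show ?thesis by (simp add: power_mult_distrib a b)
qed

lemma g_ge1:
  assumes "n \<ge> (3::nat)"
  shows "real n powr (2/3) * ln (real n) powr (1/3) \<ge> 1"
proof -
  have "ln (real n) \<ge> ln 3" using assms by simp
  moreover have "ln (3::real) \<ge> 1"
  proof -
    have "exp (1::real) \<le> 3" using exp_le by simp
    then have "ln (exp (1::real)) \<le> ln 3" by (subst ln_le_cancel_iff) auto
    then show ?thesis by simp
  qed
  ultimately have "ln (real n) \<ge> 1" by linarith
  then have l: "ln (real n) powr (1/3) \<ge> 1" by (simp add: ge_one_powr_ge_zero)
  have "real n \<ge> 1" using assms by simp
  then have r: "real n powr (2/3) \<ge> 1" by (simp add: ge_one_powr_ge_zero)
  show ?thesis using mult_mono[OF r l] by simp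
qed

lemma gap_final:
  fixes E :: "(nat \<times> nat) set"
  assumes tb: "\<forall>A. A \<noteq> {} \<longrightarrow> tb A \<in> A"
    and n: "n \<ge> 3" and E: "profile n E"
  shows "real (maxdeg n E) - exp_deg n (simple_k_sample tb (k_opt n) n) E
           \<le> 9 * (real n powr (2/3) * ln (real n) powr (1/3))"
proof -
  define g where "g = real n powr (2/3) * ln (real n) powr (1/3)"
  define c where "c = (4::real) powr (1/3)"
  define k where "k = k_opt n"
  have g1: "g \<ge> 1" using g_ge1[OF n] by (simp add: g_def)
  have c1: "c \<ge> 1" unfolding c_def by (simp add: ge_one_powr_ge_zero)
  have c4: "c \<le> 4" unfolding c_def by (rule order.trans[OF powr_mono[of "1/3" 1]]) auto
  have kdef: "k = nat \<lceil>c * g\<rceil>" by (simp add: k_def k_opt_def c_def g_def mult.assoc)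
  have cg0: "c * g \<ge> 0" using c1 g1 by simp
  have kr: "real k = of_int \<lceil>c * g\<rceil>" unfolding kdef using cg0
    by (intro of_nat_nat) (simp add: zero_le_ceiling)
  have klo: "real k \<ge> c * g" unfolding kr by (rule le_of_int_ceiling)
  have khi: "real k \<le> c * g + 1" unfolding kr by (rule of_int_ceiling_le_add_one)
  have "1 * g \<le> c * g" using c1 g1 by (intro mult_right_mono) auto
  then have kg: "real k \<ge> g" using klo by simp
  have k1: "k \<ge> 1" using kg g1 by linarith
  have npos: "real n > 0" using n by simp
  have lpos: "ln (real n) > 0" using n by simp
  have cube: "g^3 = (real n)^2 * ln (real n)" using g_cube[OF n] by (simp add: g_def)
  have sq: "real n * sqrt (real k * ln (real n)) / real k \<le> g"
  proof -
    have s2: "(sqrt (real k * ln (real n)))^2 = real k * ln (real n)" using lpos k1 by (intro real_sqrt_pow2) simp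
    have "(real n * sqrt (real k * ln (real n)))^2 = (real n)^2 * (sqrt (real k * ln (real n)))^2"
      by (rule power_mult_distrib)
    also have "\<dots> = ((real n)^2 * ln (real n)) * real k" unfolding s2 by (simp only: mult_ac)
    also have "\<dots> = g^3 * real k" by (simp only: cube)
    also have "\<dots> \<le> g^2 * real k * real k"
    proof -
      have "g^3 = g^2 * g" by (simp add: power3_eq_cube power2_eq_square)
      also have "\<dots> \<le> g^2 * real k" using kg by (intro mult_left_mono) auto
      finally have "g^3 \<le> g^2 * real k" .
      then show ?thesis using k1 by (intro mult_right_mono) auto
    qed
    also have "\<dots> = (g * real k)^2" by (simp add: power2_eq_square)
    finally have le2: "(real n * sqrt (real k * ln (real n)))^2 \<le> (g * real k)^2" .
    have "0 \<le> g * real k" using g1 k1 by (intro mult_nonneg_nonneg) auto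
    then have "real n * sqrt (real k * ln (real n)) \<le> g * real k"
      using le2 by (rule power2_le_imp_le[rotated])
    then show ?thesis using k1 by (simp add: divide_le_eq)
  qed
  have "real (maxdeg n E) - exp_deg n (simple_k_sample tb k n) E
           \<le> real k + 2 + 2 * real n * sqrt (real k * ln (real n)) / real k"
    using n k1 by (intro gap_bound[OF tb _ _ E]) auto
  also have "\<dots> \<le> (4 * g + 1) + 2 + 2 * g"
  proof -
    have "c * g \<le> 4 * g" using c4 g1 by (intro mult_right_mono) auto
    then show ?thesis using khi sq by simp
  qed
  also have "\<dots> \<le> 9 * g" using g1 by simp
  finally show ?thesis by (simp add: k_def g_def)
qed

lemma worst_gap_bounds:
  assumes tb: "\<forall>A. A \<noteq> {} \<longrightarrow> tb A \<in> A" and n: "n \<ge> 3"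
  shows "0 \<le> worst_gap n (simple_k_sample tb (k_opt n) n)"
    and "worst_gap n (simple_k_sample tb (k_opt n) n) \<le> 9 * (real n powr (2/3) * ln (real n) powr (1/3))"
proof -
  let ?f = "simple_k_sample tb (k_opt n) n"
  let ?h = "\<lambda>E. real (maxdeg n E) - exp_deg n ?f E"
  have fin: "finite (profiles n)"
  proof (rule finite_subset)
    show "profiles n \<subseteq> Pow (verts n \<times> verts n)" by (auto simp: profiles_def profile_def)
  qed (simp add: verts_def)
  have e: "{} \<in> profiles n" by (simp add: profiles_def profile_def)
  have vne: "verts n \<noteq> {}" using n by (auto simp: verts_def)
  have h0: "?h {} = 0"
    using vne by (simp add: maxdeg_def exp_deg_def indeg_def indeg_from_def image_constant_conv)
  show "0 \<le> worst_gap n ?f"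
    unfolding worst_gap_def using fin e h0 by (intro order.trans[OF _ Max_ge[of _ "?h {}"]]) auto
  show "worst_gap n ?f \<le> 9 * (real n powr (2/3) * ln (real n) powr (1/3))"
    unfolding worst_gap_def using fin e
    by (subst Max_le_iff) (auto simp: profiles_def intro!: gap_final[OF tb n])
qed

theorem mainTheorem1:
  fixes tb :: "nat set \<Rightarrow> nat"
  assumes tb: "\<forall>A. A \<noteq> {} \<longrightarrow> tb A \<in> A"
  shows "(\<forall>n\<ge>2. impartial n (simple_k_sample tb (k_opt n) n)) \<and>
         (\<lambda>n. worst_gap n (simple_k_sample tb (k_opt n) n))
           \<in> O(\<lambda>n. real n powr (2/3) * ln (real n) powr (1/3))"
proof
  show "\<forall>n\<ge>2. impartial n (simple_k_sample tb (k_opt n) n)"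
    using impartial_sks[OF tb] by blast
  show "(\<lambda>n. worst_gap n (simple_k_sample tb (k_opt n) n))
           \<in> O(\<lambda>n. real n powr (2/3) * ln (real n) powr (1/3))"
  proof (rule bigoI[where c = 9])
    show "eventually (\<lambda>n. norm (worst_gap n (simple_k_sample tb (k_opt n) n))
            \<le> 9 * norm (real n powr (2/3) * ln (real n) powr (1/3))) at_top"
      unfolding eventually_at_top_linorder
    proof (intro exI[of _ 3] allI impI)
      fix n :: nat assume n: "n \<ge> 3"
      have "real n powr (2/3) * ln (real n) powr (1/3) \<ge> 1" by (rule g_ge1[OF n])
      then show "norm (worst_gap n (simple_k_sample tb (k_opt n) n))
            \<le> 9 * norm (real n powr (2/3) * ln (real n) powr (1/3))"
        using worst_gap_bounds[OF tb n] by simp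
    qed
  qed
qed

end
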